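(* Let $G$ be a finite simple graph and $k\ge 1$ an integer. If $Z_k(G)=k$, then $Z_{k-1}(G)=k$.
   Context: Filling rule: if a filled vertex has exactly one unfilled neighbor (and any number of filled neighbors), that neighbor becomes filled; "applying the filling rule in a subgraph $H$" means applying it with neighborhoods taken in $H$. The $Z_q$-Game on $G$ ($q\ge 0$ an integer): initially all vertices are unfilled; a player repeatedly performs one of the following operations until all vertices are filled: (1) for one token, change any vertex from unfilled to filled; (2) at no cost, apply the filling rule in $G$; (3) if $F$ is the current set of filled vertices and $U_1,\dots,U_k$ are the vertex sets of the connected components of $G[V(G)\setminus F]$ with $k\ge q+1$, the player announces a selection of at least $q+1$ of the $U_i$ to an oracle (an adversary), the oracle returns a nonempty subset $\{U_{i_1},\dots,U_{i_\ell}\}$ of the selected components, and the player may at no cost apply the filling rule in $G[F\cup U_{i_1}\cup\cdots\cup U_{i_\ell}]$. $Z_q(G)$ is the minimum number of tokens with which the player can guarantee that all vertices become filled, regardless of the oracle's responses. *)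

theory Defs
  imports Main
begin

definition simple_graph :: "'a set \<Rightarrow> ('a \<Rightarrow> 'a \<Rightarrow> bool) \<Rightarrow> bool" where
  "simple_graph V E \<longleftrightarrow> finite V \<and> (\<forall>x y. E x y \<longrightarrow> E y x)
     \<and> (\<forall>x. \<not> E x x) \<and> (\<forall>x y. E x y \<longrightarrow> x \<in> V \<and> y \<in> V)"

definition components :: "('a \<Rightarrow> 'a \<Rightarrow> bool) \<Rightarrow> 'a set \<Rightarrow> 'a set set" where
  "components E W =
     (\<lambda>x. {y \<in> W. (\<lambda>a b. a \<in> W \<and> b \<in> W \<and> E a b)\<^sup>*\<^sup>* x y}) ` W"

definition fill_step :: "('a \<Rightarrow> 'a \<Rightarrow> bool) \<Rightarrow> 'a set \<Rightarrow> 'a set \<Rightarrow> 'a set \<Rightarrow> bool" where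
  "fill_step E H F F' \<longleftrightarrow> (\<exists>u w. u \<in> F \<and> u \<in> H \<and> w \<in> H - F \<and> E u w \<and>
      (\<forall>x \<in> H - F. E u x \<longrightarrow> x = w) \<and> F' = insert w F)"

text \<open>zq_win V E q t F: from the position with filled set F, the player can
  guarantee (against every adversary answer) that all vertices get filled using at most
  t further tokens.\<close>
inductive zq_win :: "'a set \<Rightarrow> ('a \<Rightarrow> 'a \<Rightarrow> bool) \<Rightarrow> nat \<Rightarrow> nat \<Rightarrow> 'a set \<Rightarrow> bool"
  for V E q where
  finished: "F = V \<Longrightarrow> zq_win V E q t F"
| token: "v \<in> V - F \<Longrightarrow> zq_win V E q t (insert v F) \<Longrightarrow> zq_win V E q (Suc t) F"
| force: "fill_step E V F F' \<Longrightarrow> zq_win V E q t F' \<Longrightarrow> zq_win V E q t F"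
| adversary_move: "S \<subseteq> components E (V - F) \<Longrightarrow> card S \<ge> q + 1 \<Longrightarrow>
     (\<forall>R. R \<subseteq> S \<and> R \<noteq> {} \<longrightarrow>
        (\<exists>F'. (fill_step E (F \<union> \<Union>R))\<^sup>*\<^sup>* F F' \<and> zq_win V E q t F'))
     \<Longrightarrow> zq_win V E q t F"

definition Zq :: "'a set \<Rightarrow> ('a \<Rightarrow> 'a \<Rightarrow> bool) \<Rightarrow> nat \<Rightarrow> nat" where
  "Zq V E q = (LEAST t. zq_win V E q t {})"

end

theory Submission
  imports Defs
begin

definition active :: "'a set \<Rightarrow> ('a \<Rightarrow> 'a \<Rightarrow> bool) \<Rightarrow> 'a set \<Rightarrow> 'a set" where
  "active V E F = {x \<in> V \<inter> F. \<exists>y \<in> V - F. E x y}"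

lemma active_fin: "finite V \<Longrightarrow> finite (active V E F)"
  unfolding active_def by auto

lemma active_insert:
  assumes "finite V"
  shows "card (active V E (insert v F)) \<le> card (active V E F) + 1"
proof -
  have "active V E (insert v F) \<subseteq> insert v (active V E F)"
    unfolding active_def by auto
  hence "card (active V E (insert v F)) \<le> card (insert v (active V E F))"
    by (intro card_mono) (auto simp: active_fin assms)
  also have "\<dots> \<le> card (active V E F) + 1" by (simp add: card_insert_if active_fin assms)
  finally show ?thesis .
qed

lemma active_fill:
  assumes "finite V" "fill_step E V F F'"
  shows "card (active V E F') \<le> card (active V E F)"
proof -
  obtain u w where uw: "u \<in> F" "u \<in> V" "w \<in> V - F" "E u w"
    "\<forall>x \<in> V - F. E u x \<longrightarrow> x = w" and F': "F' = insert w F"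
    using assms(2) unfolding fill_step_def by metis
  have ua: "u \<in> active V E F" using uw unfolding active_def by blast
  have sub: "active V E F' \<subseteq> insert w (active V E F - {u})"
  proof
    fix x assume "x \<in> active V E F'"
    then obtain y where xy: "x \<in> V" "x \<in> insert w F" "y \<in> V" "y \<notin> insert w F" "E x y"
      unfolding active_def F' by blast
    show "x \<in> insert w (active V E F - {u})"
    proof (cases "x = w")
      case False
      then have "x \<in> F" using xy by blast
      moreover have "x \<noteq> u" using uw(5) xy by blast
      ultimately show ?thesis using xy unfolding active_def by blast
    qed simp
  qed
  have "card (active V E F') \<le> card (insert w (active V E F - {u}))"
    by (rule card_mono[OF _ sub]) (simp add: active_fin assms)
  also have "\<dots> \<le> card (active V E F - {u}) + 1"
    by (simp add: card_insert_if active_fin assms)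
  also have "\<dots> = card (active V E F)"
  proof -
    have "card (active V E F) > 0" using ua active_fin[OF assms(1)] card_gt_0_iff by blast
    then show ?thesis using ua active_fin[OF assms(1)] by (simp add: card_Diff_singleton)
  qed
  finally show ?thesis .
qed

lemma pick_R:
  fixes N :: "'a \<Rightarrow> 'a \<Rightarrow> bool"
  shows "finite A \<Longrightarrow> finite S \<Longrightarrow> card A < card S \<Longrightarrow>
    (\<forall>U\<in>S. \<forall>U'\<in>S. U \<noteq> U' \<longrightarrow> U \<inter> U' = {}) \<Longrightarrow>
    \<exists>R. R \<subseteq> S \<and> R \<noteq> {} \<and> (\<forall>a\<in>A. \<forall>w\<in>\<Union>R. N a w \<longrightarrow> (\<exists>w'\<in>\<Union>R. w' \<noteq> w \<and> N a w'))"
proof (induction "card A" arbitrary: A S rule: less_induct)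
  case less
  show ?case
  proof (cases "\<forall>a\<in>A. \<forall>w\<in>\<Union>S. N a w \<longrightarrow> (\<exists>w'\<in>\<Union>S. w' \<noteq> w \<and> N a w')")
    case True
    have "S \<noteq> {}" using less.prems(3) by auto
    then show ?thesis using True by blast
  next
    case False
    then obtain a w where aw: "a \<in> A" "w \<in> \<Union>S" "N a w"
      "\<forall>w'\<in>\<Union>S. N a w' \<longrightarrow> w' = w" by blast
    define S' where "S' = {U \<in> S. w \<notin> U}"
    obtain U0 where U0: "U0 \<in> S" "w \<in> U0" using aw by blast
    have sub: "{U \<in> S. w \<in> U} \<subseteq> {U0}"
    proof
      fix U assume "U \<in> {U \<in> S. w \<in> U}"
      then have "U \<in> S" "w \<in> U" by auto
      then show "U \<in> {U0}" using less.prems(4) U0 by auto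
    qed
    have c1: "card {U \<in> S. w \<in> U} \<le> 1"
      using card_mono[OF _ sub] by simp
    have "S = S' \<union> {U \<in> S. w \<in> U}" unfolding S'_def by auto
    hence "card S \<le> card S' + card {U \<in> S. w \<in> U}" using card_Un_le by metis
    hence cS: "card S' + 1 \<ge> card S" using c1 by linarith
    have "card A > 0" using aw(1) less.prems(1) card_gt_0_iff by blast
    hence cA: "card (A - {a}) + 1 = card A" using aw(1) less.prems(1)
      by (simp add: card_Diff_singleton)
    have "\<exists>R. R \<subseteq> S' \<and> R \<noteq> {} \<and> (\<forall>b\<in>A - {a}. \<forall>x\<in>\<Union>R. N b x \<longrightarrow> (\<exists>w'\<in>\<Union>R. w' \<noteq> x \<and> N b w'))"
    proof (rule less.hyps)
      show "card (A - {a}) < card A" using cA by linarith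
      show "finite (A - {a})" using less.prems(1) by blast
      show "finite S'" using less.prems(2) unfolding S'_def by simp
      show "card (A - {a}) < card S'" using cA cS less.prems(3) by linarith
      show "\<forall>U\<in>S'. \<forall>U'\<in>S'. U \<noteq> U' \<longrightarrow> U \<inter> U' = {}"
        using less.prems(4) unfolding S'_def by blast
    qed
    then obtain R where R: "R \<subseteq> S'" "R \<noteq> {}"
      "\<forall>b\<in>A - {a}. \<forall>x\<in>\<Union>R. N b x \<longrightarrow> (\<exists>w'\<in>\<Union>R. w' \<noteq> x \<and> N b w')" by blast
    have "\<forall>x\<in>\<Union>R. \<not> N a x"
    proof
      fix x assume "x \<in> \<Union>R"
      then obtain U where "U \<in> R" "x \<in> U" by blast
      then have "U \<in> S" "w \<notin> U" using R(1) unfolding S'_def by auto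
      then show "\<not> N a x" using aw(4) \<open>x \<in> U\<close> by blast
    qed
    then have "\<forall>b\<in>A. \<forall>x\<in>\<Union>R. N b x \<longrightarrow> (\<exists>w'\<in>\<Union>R. w' \<noteq> x \<and> N b w')"
      using R(3) by blast
    moreover have "R \<subseteq> S" using R(1) unfolding S'_def by blast
    ultimately show ?thesis using R(2) by blast
  qed
qed

lemma rtr_sym:
  assumes "\<And>x y. r x y \<Longrightarrow> r y x"
  shows "r\<^sup>*\<^sup>* a b \<Longrightarrow> r\<^sup>*\<^sup>* b a"
proof (induction rule: rtranclp.induct)
  case (rtrancl_refl a) then show ?case by simp
next
  case (rtrancl_into_rtrancl a b c)
  then show ?case using assms converse_rtranclp_into_rtranclp by metis
qed

lemma components_disj:
  assumes "\<forall>x y. E x y \<longrightarrow> E y x"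
  shows "\<forall>U\<in>components E W. \<forall>U'\<in>components E W. U \<noteq> U' \<longrightarrow> U \<inter> U' = {}"
proof (intro ballI impI)
  let ?r = "\<lambda>a b. a \<in> W \<and> b \<in> W \<and> E a b"
  have sym: "\<And>x y. ?r x y \<Longrightarrow> ?r y x" using assms by blast
  fix U U' assume U: "U \<in> components E W" and U': "U' \<in> components E W" and ne: "U \<noteq> U'"
  obtain x where x: "U = {y \<in> W. ?r\<^sup>*\<^sup>* x y}" using U unfolding components_def by blast
  obtain x' where x': "U' = {y \<in> W. ?r\<^sup>*\<^sup>* x' y}" using U' unfolding components_def by blast
  show "U \<inter> U' = {}"
  proof (rule ccontr)
    assume "U \<inter> U' \<noteq> {}"
    then obtain z where "?r\<^sup>*\<^sup>* x z" "?r\<^sup>*\<^sup>* x' z" using x x' by blast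
    then have z: "?r\<^sup>*\<^sup>* x z" "?r\<^sup>*\<^sup>* x' z" by auto
    have zx: "?r\<^sup>*\<^sup>* z x" "?r\<^sup>*\<^sup>* z x'"
      using rtr_sym[of ?r, OF sym z(1)] rtr_sym[of ?r, OF sym z(2)] by auto
    have xx1: "?r\<^sup>*\<^sup>* x x'" by (rule rtranclp_trans[OF z(1) zx(2)])
    have xx2: "?r\<^sup>*\<^sup>* x' x" by (rule rtranclp_trans[OF z(2) zx(1)])
    have "\<And>y. ?r\<^sup>*\<^sup>* x y \<longleftrightarrow> ?r\<^sup>*\<^sup>* x' y"
      using rtranclp_trans[OF xx1] rtranclp_trans[OF xx2] by blast
    then have "U = U'" unfolding x x' by simp
    then show False using ne by simp
  qed
qed

lemma components_sub: "U \<in> components E W \<Longrightarrow> U \<subseteq> W"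
  unfolding components_def by auto

lemma main:
  assumes G: "simple_graph V E"
  shows "zq_win V E q t F \<Longrightarrow> card (active V E F) + t \<le> q \<Longrightarrow> zq_win V E q' t F"
proof (induction rule: zq_win.induct)
  case (finished F t)
  then show ?case by (simp add: zq_win.finished)
next
  case (token v F t)
  have finV0: "finite V" using G unfolding simple_graph_def by blast
  have "card (active V E (insert v F)) \<le> card (active V E F) + 1"
    by (rule active_insert[OF finV0])
  then have "zq_win V E q' t (insert v F)" using token by simp
  then show ?case by (rule zq_win.token[OF token(1)])
next
  case (force F F' t)
  have finV0: "finite V" using G unfolding simple_graph_def by blast
  have "card (active V E F') \<le> card (active V E F)"
    by (rule active_fill[OF finV0 force(1)])
  then have "zq_win V E q' t F'" using force by simp
  then show ?case by (rule zq_win.force[OF force(1)])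
next
  case (adversary_move S F t)
  have finV: "finite V" using G unfolding simple_graph_def by blast
  have symE: "\<forall>x y. E x y \<longrightarrow> E y x" using G unfolding simple_graph_def by blast
  have finS: "finite S" using adversary_move(2) card.infinite by fastforce
  have lt: "card (active V E F) < card S" using adversary_move(2,4) by linarith
  have disjS: "\<forall>U\<in>S. \<forall>U'\<in>S. U \<noteq> U' \<longrightarrow> U \<inter> U' = {}"
    using components_disj[OF symE, of "V - F"] adversary_move(1) by blast
  have "\<exists>R. R \<subseteq> S \<and> R \<noteq> {} \<and>
      (\<forall>a\<in>active V E F. \<forall>w\<in>\<Union>R. E a w \<longrightarrow> (\<exists>w'\<in>\<Union>R. w' \<noteq> w \<and> E a w'))"
    by (rule pick_R[where N=E, OF active_fin[OF finV] finS lt disjS])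
  then obtain R where R: "R \<subseteq> S" "R \<noteq> {}"
    "\<forall>a\<in>active V E F. \<forall>w\<in>\<Union>R. E a w \<longrightarrow> (\<exists>w'\<in>\<Union>R. w' \<noteq> w \<and> E a w')"
    by blast
  have RV: "\<Union>R \<subseteq> V - F" using R(1) adversary_move(1) components_sub by blast
  obtain F' where F': "(fill_step E (F \<union> \<Union>R))\<^sup>*\<^sup>* F F'" "zq_win V E q t F'"
    "card (active V E F') + t \<le> q \<longrightarrow> zq_win V E q' t F'"
    using adversary_move(3) R(1,2) by blast
  have nostep: "\<not> fill_step E (F \<union> \<Union>R) F X" for X
  proof
    assume "fill_step E (F \<union> \<Union>R) F X"
    then obtain u w where uw: "u \<in> F" "w \<in> (F \<union> \<Union>R) - F" "E u w"
      "\<forall>x \<in> (F \<union> \<Union>R) - F. E u x \<longrightarrow> x = w" unfolding fill_step_def by blast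
    have wR: "w \<in> \<Union>R" using uw(2) by blast
    have "u \<in> V" using uw(3) G unfolding simple_graph_def by blast
    then have "u \<in> active V E F" using uw wR RV unfolding active_def by blast
    then obtain w' where "w' \<in> \<Union>R" "w' \<noteq> w" "E u w'" using R(3) wR uw(3) by blast
    then show False using uw(4) RV by blast
  qed
  have "F' = F" using F'(1) by (cases rule: converse_rtranclpE) (auto simp: nostep)
  then show ?case using F'(3) adversary_move(4) by simp
qed

lemma mono_q:
  "zq_win V E q t F \<Longrightarrow> q' \<le> q \<Longrightarrow> zq_win V E q' t F"
proof (induction rule: zq_win.induct)
  case (finished F t) then show ?case by (simp add: zq_win.finished)
next
  case (token v F t) then show ?case by (simp add: zq_win.token)
next
  case (force F F' t) then show ?case by (meson zq_win.force)
next
  case (adversary_move S F t)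
  show ?case
  proof (rule zq_win.adversary_move[OF adversary_move(1)])
    show "q' + 1 \<le> card S" using adversary_move by linarith
    show "\<forall>R. R \<subseteq> S \<and> R \<noteq> {} \<longrightarrow> (\<exists>F'. (fill_step E (F \<union> \<Union>R))\<^sup>*\<^sup>* F F' \<and> zq_win V E q' t F')"
      using adversary_move(3,4) by blast
  qed
qed

lemma exists_win:
  assumes "finite V"
  shows "F \<subseteq> V \<Longrightarrow> zq_win V E q (card (V - F)) F"
proof (induction "card (V - F)" arbitrary: F rule: less_induct)
  case less
  show ?case
  proof (cases "F = V")
    case True then show ?thesis by (simp add: zq_win.finished)
  next
    case False
    then obtain v where v: "v \<in> V - F" using less.prems by blast
    have c: "card (V - F) = Suc (card (V - insert v F))"
      using v assms by (metis Diff_insert card_Suc_Diff1 finite_Diff)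
    have lt: "card (V - insert v F) < card (V - F)" using c by simp
    have sub: "insert v F \<subseteq> V" using v less.prems by blast
    have "zq_win V E q (card (V - insert v F)) (insert v F)"
      by (rule less.hyps[OF lt sub])
    then have "zq_win V E q (Suc (card (V - insert v F))) F"
      by (rule zq_win.token[OF v])
    then show ?thesis unfolding c .
  qed
qed

theorem corollary2p3:
  fixes V :: "'a set" and E :: "'a \<Rightarrow> 'a \<Rightarrow> bool" and k :: nat
  assumes "simple_graph V E" and "k \<ge> 1" and "Zq V E k = k"
  shows "Zq V E (k - 1) = k"
proof -
  have finV: "finite V" using assms(1) unfolding simple_graph_def by simp
  have ex: "\<exists>t. zq_win V E q t {}" for q
    using exists_win[OF finV, where F="{}" and q=q] by (intro exI) simp
  have wk: "zq_win V E k k {}" using LeastI_ex[OF ex[of k]] assms(3) unfolding Zq_def by simp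
  have "zq_win V E (k - 1) k {}" using mono_q[OF wk] by simp
  then have le: "Zq V E (k - 1) \<le> k" unfolding Zq_def by (rule Least_le)
  have w1: "zq_win V E (k - 1) (Zq V E (k - 1)) {}"
    using LeastI_ex[OF ex[of "k - 1"]] unfolding Zq_def by simp
  have "\<not> Zq V E (k - 1) < k"
  proof
    assume lt: "Zq V E (k - 1) < k"
    have a0: "active V E {} = {}" unfolding active_def by simp
    have "zq_win V E k (Zq V E (k - 1)) {}"
      using main[OF assms(1) w1] a0 lt by simp
    then have "Zq V E k \<le> Zq V E (k - 1)" unfolding Zq_def by (rule Least_le)
    then show False using lt assms(3) by simp
  qed
  then show ?thesis using le by simp
qed

end
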